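(* In the situation of a path coalescing transformation, suppose in addition that $H$ is sub-additive, i.e. $H(A\cup B)\le H(A)+H(B)$ for all disjoint nonempty $A,B\subseteq X$. Then $\mathcal H(P')\le\mathcal H(P)$.
   Context: $X$ is a finite set and $H$ a real-valued function on nonempty subsets of $X$; write $H(a)=H(\{a\})$, $H(a,b)=H(\{a,b\})$; elements $a,b$ are combinatorially dependent if $H(a,b)<H(a)+H(b)$, independent otherwise. $G(X)$ is the complete undirected graph on $X$. A tour $P$ is a Hamiltonian cycle of $G(X)$ given as a directed cyclic sequence of all elements of $X$. $\mathcal S(P)$ is the set of maximal subpaths obtained by deleting from $P$ every edge whose endpoints are combinatorially independent; their vertex sets partition $X$, and $\mathcal H(P)=\sum_{Q\in\mathcal S(P)}H(V(Q))$, where $V(Q)$ is the vertex set of $Q$. A path coalescing transformation: $P_i=(u_0,\dots,u_k)$ and $P_j=(v_0,\dots,v_\ell)$ are distinct paths of $\mathcal S(P)$ with $u_k,v_0$ combinatorially dependent; $x$ is the successor of $u_k$ in $P$, $y$ the predecessor of $v_0$, $z$ the successor of $v_\ell$; $P'$ is a tour whose edge multiset is that of $P$ with $\{u_k,x\},\{y,v_0\},\{v_\ell,z\}$ replaced by $\{u_k,v_0\},\{v_\ell,x\},\{y,z\}$. *)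

theory Defs
  imports Complex_Main "HOL-Library.Multiset"
begin

definition dep :: "('a set \<Rightarrow> real) \<Rightarrow> 'a \<Rightarrow> 'a \<Rightarrow> bool" where
  "dep H a b \<longleftrightarrow> H {a, b} < H {a} + H {b}"

text \<open>A tour of X: a directed cyclic sequence listing each element of X exactly once.
  Position i is followed by position (i+1) mod n.\<close>
definition tour :: "'a set \<Rightarrow> 'a list \<Rightarrow> bool" where
  "tour X P \<longleftrightarrow> distinct P \<and> set P = X"

definition pos :: "'a list \<Rightarrow> 'a \<Rightarrow> nat" where
  "pos P v = (LEAST i. i < length P \<and> P ! i = v)"

definition succ :: "'a list \<Rightarrow> 'a \<Rightarrow> 'a" where
  "succ P v = P ! ((pos P v + 1) mod length P)"

definition pred :: "'a list \<Rightarrow> 'a \<Rightarrow> 'a" where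
  "pred P v = P ! ((pos P v + length P - 1) mod length P)"

definition tour_edges :: "'a list \<Rightarrow> 'a set multiset" where
  "tour_edges P = mset (map (\<lambda>i. {P ! i, P ! ((i + 1) mod length P)}) [0..<length P])"

definition subpath :: "'a list \<Rightarrow> 'a list \<Rightarrow> bool" where
  "subpath P Q \<longleftrightarrow> Q \<noteq> [] \<and> length Q \<le> length P \<and>
     (\<exists>i<length P. \<forall>j<length Q. Q ! j = P ! ((i + j) mod length P))"

text \<open>Q is a maximal subpath of P after deleting every edge of P with independent endpoints,
  i.e. a member of the family S(P): all its edges are dependent, and the tour edges
  entering its first vertex and leaving its last vertex are deleted (independent).\<close>
definition max_subpath :: "('a set \<Rightarrow> real) \<Rightarrow> 'a list \<Rightarrow> 'a list \<Rightarrow> bool" where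
  "max_subpath H P Q \<longleftrightarrow> subpath P Q \<and>
     (\<forall>j. j + 1 < length Q \<longrightarrow> dep H (Q ! j) (Q ! (j + 1))) \<and>
     \<not> dep H (last Q) (succ P (last Q)) \<and>
     \<not> dep H (pred P (hd Q)) (hd Q)"

definition dep_edges :: "('a set \<Rightarrow> real) \<Rightarrow> 'a list \<Rightarrow> ('a \<times> 'a) set" where
  "dep_edges H P = {(P ! i, P ! ((i + 1) mod length P)) | i. i < length P \<and>
                      dep H (P ! i) (P ! ((i + 1) mod length P))}"

text \<open>Vertex sets of the pieces of S(P): connected components of the cycle after deleting
  all independent edges (if no edge is deleted, the single piece is all of X).\<close>
definition pieces :: "('a set \<Rightarrow> real) \<Rightarrow> 'a list \<Rightarrow> 'a set set" where
  "pieces H P = (\<lambda>a. {b \<in> set P. (a, b) \<in> (dep_edges H P \<union> (dep_edges H P)\<inverse>)\<^sup>*}) ` set P"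

definition calH :: "('a set \<Rightarrow> real) \<Rightarrow> 'a list \<Rightarrow> real" where
  "calH H P = (\<Sum>B \<in> pieces H P. H B)"

definition subadditive :: "'a set \<Rightarrow> ('a set \<Rightarrow> real) \<Rightarrow> bool" where
  "subadditive X H \<longleftrightarrow> (\<forall>A B. A \<subseteq> X \<longrightarrow> B \<subseteq> X \<longrightarrow> A \<noteq> {} \<longrightarrow> B \<noteq> {} \<longrightarrow>
      A \<inter> B = {} \<longrightarrow> H (A \<union> B) \<le> H A + H B)"

end

theory Submission
  imports Defs
begin

lemma sub_union:
  assumes sa: "subadditive X H" and fin: "finite F" and ne: "F \<noteq> {}"
    and el: "\<forall>C\<in>F. C \<noteq> {} \<and> C \<subseteq> X"
    and dj: "\<forall>C\<in>F. \<forall>D\<in>F. C \<noteq> D \<longrightarrow> C \<inter> D = {}"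
  shows "H (\<Union>F) \<le> sum H F"
  using fin ne el dj
proof (induction F rule: finite_ne_induct)
  case (singleton x)
  then show ?case by simp
next
  case (insert C F)
  have pC: "C \<noteq> {}" "C \<subseteq> X" using insert.prems(1) by auto
  have pF: "\<forall>C\<in>F. C \<noteq> {} \<and> C \<subseteq> X" using insert.prems(1) by auto
  have dF: "\<forall>C'\<in>F. \<forall>D\<in>F. C' \<noteq> D \<longrightarrow> C' \<inter> D = {}" using insert.prems(2) by auto
  have dC: "\<forall>D\<in>F. C \<inter> D = {}" using insert.prems(2) insert.hyps(3) by auto
  have d: "C \<inter> \<Union>F = {}" using dC by auto
  obtain D where "D \<in> F" using insert.hyps(2) by auto
  then have n: "\<Union>F \<noteq> {}" using pF by auto
  have UX: "\<Union>F \<subseteq> X" using pF by auto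
  have "H (C \<union> \<Union>F) \<le> H C + H (\<Union>F)"
    using sa d n pC UX unfolding subadditive_def by blast
  also have "\<dots> \<le> H C + sum H F" using insert.IH[OF pF dF] by simp
  finally show ?case using insert.hyps by simp
qed

lemma coarser:
  assumes sa: "subadditive X H" and fin: "finite X"
    and a1: "\<And>a. a\<in>X \<Longrightarrow> a \<in> c1 a" and b1: "\<And>a b. a\<in>X \<Longrightarrow> b \<in> c1 a \<Longrightarrow> c1 b = c1 a"
    and s1: "\<And>a. a\<in>X \<Longrightarrow> c1 a \<subseteq> X"
    and a2: "\<And>a. a\<in>X \<Longrightarrow> a \<in> c2 a" and b2: "\<And>a b. a\<in>X \<Longrightarrow> b \<in> c2 a \<Longrightarrow> c2 b = c2 a"
    and s2: "\<And>a. a\<in>X \<Longrightarrow> c2 a \<subseteq> X"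
    and sub: "\<And>a. a\<in>X \<Longrightarrow> c1 a \<subseteq> c2 a"
  shows "sum H (c2 ` X) \<le> sum H (c1 ` X)"
proof -
  define g where "g C = \<Union>(c2 ` C)" for C
  have g1: "g (c1 a) = c2 a" if "a \<in> X" for a
  proof -
    have "c2 ` (c1 a) = {c2 a}"
    proof
      show "c2 ` c1 a \<subseteq> {c2 a}" using b2 sub that by blast
      show "{c2 a} \<subseteq> c2 ` c1 a" using a1 that by blast
    qed
    then show ?thesis unfolding g_def by simp
  qed
  have "sum H (c1 ` X) = sum (\<lambda>B. sum H {C\<in>c1`X. g C = B}) (c2 ` X)"
    by (rule sum.group[symmetric]) (use fin g1 in auto)
  moreover have "H B \<le> sum H {C\<in>c1`X. g C = B}" if B: "B \<in> c2 ` X" for B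
  proof -
    obtain a where a: "a \<in> X" "B = c2 a" using B by blast
    define F where "F = {C\<in>c1`X. g C = B}"
    have U: "\<Union>F = B"
    proof
      show "\<Union>F \<subseteq> B"
      proof
        fix x assume "x \<in> \<Union>F"
        then obtain b where "b \<in> X" "x \<in> c1 b" "g (c1 b) = B" unfolding F_def by blast
        then show "x \<in> B" using g1 sub by blast
      qed
      show "B \<subseteq> \<Union>F"
      proof
        fix x assume x: "x \<in> B"
        then have xX: "x \<in> X" using s2 a by blast
        have "g (c1 x) = B" using g1[OF xX] b2 a x by simp
        then have "c1 x \<in> F" unfolding F_def using xX by blast
        then show "x \<in> \<Union>F" using a1 xX by blast
      qed
    qed
    have "H (\<Union>F) \<le> sum H F"
    proof (rule sub_union[OF sa])
      show "finite F" unfolding F_def using fin by simp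
      show "F \<noteq> {}" using U a a2 by blast
      show "\<forall>C\<in>F. C \<noteq> {} \<and> C \<subseteq> X" unfolding F_def using a1 s1 by blast
      show "\<forall>C\<in>F. \<forall>D\<in>F. C \<noteq> D \<longrightarrow> C \<inter> D = {}"
      proof (intro ballI impI)
        fix C D assume "C \<in> F" "D \<in> F" "C \<noteq> D"
        then obtain b b' where "b \<in> X" "b' \<in> X" "C = c1 b" "D = c1 b'" "c1 b \<noteq> c1 b'"
          unfolding F_def by blast
        then show "C \<inter> D = {}" using b1 by blast
      qed
    qed
    then show ?thesis using U F_def by simp
  qed
  ultimately show ?thesis by (simp add: sum_mono)
qed

lemma dep_sym: "dep H a b = dep H b a"
  unfolding dep_def by (simp add: insert_commute add.commute)

lemma dep_set: "{a, b} = {x, y} \<Longrightarrow> dep H a b = dep H x y"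
  by (metis dep_sym doubleton_eq_iff)

lemma edge_in_tour: "i < length P \<Longrightarrow> {P ! i, P ! ((i + 1) mod length P)} \<in># tour_edges P"
  unfolding tour_edges_def by auto

lemma tour_edge_dep:
  assumes "{x, y} \<in># tour_edges P" "dep H x y"
  shows "(x, y) \<in> dep_edges H P \<union> (dep_edges H P)\<inverse>"
proof -
  obtain i where i: "i < length P" "{x, y} = {P ! i, P ! ((i + 1) mod length P)}"
    using assms(1) unfolding tour_edges_def by auto
  then have d: "dep H (P ! i) (P ! ((i + 1) mod length P))" using assms(2) dep_set by metis
  then have "(P ! i, P ! ((i + 1) mod length P)) \<in> dep_edges H P"
    unfolding dep_edges_def using i by blast
  then show ?thesis using i(2) by (auto simp: doubleton_eq_iff)
qed

lemma cls_props:
  fixes R :: "('a \<times> 'a) set" and X :: "'a set"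
  assumes c_def: "c = (\<lambda>a. {b \<in> X. (a, b) \<in> (R \<union> R\<inverse>)\<^sup>*})"
  shows "a \<in> X \<Longrightarrow> a \<in> c a" and "a \<in> X \<Longrightarrow> b \<in> c a \<Longrightarrow> c b = c a"
    and "c a \<subseteq> X"
proof -
  show "a \<in> X \<Longrightarrow> a \<in> c a" unfolding c_def by simp
  show "c a \<subseteq> X" unfolding c_def by blast
  have sy: "sym ((R \<union> R\<inverse>)\<^sup>*)" by (simp add: sym_Un_converse sym_rtrancl)
  assume "a \<in> X" "b \<in> c a"
  then have ab: "(a, b) \<in> (R \<union> R\<inverse>)\<^sup>*" and ba: "(b, a) \<in> (R \<union> R\<inverse>)\<^sup>*"
    unfolding c_def using sy by (auto dest: symD)
  show "c b = c a" unfolding c_def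
    using ab ba by (blast intro: rtrancl_trans)
qed

theorem mainTheorem4:
  fixes X :: "'a set" and H :: "'a set \<Rightarrow> real"
    and P P' Pi Pj :: "'a list"
  assumes "finite X"
    and "tour X P"
    and "max_subpath H P Pi" and "max_subpath H P Pj" and "Pi \<noteq> Pj"
    and "dep H (last Pi) (hd Pj)"
    and "tour X P'"
    and "tour_edges P' =
           tour_edges P - {# {last Pi, succ P (last Pi)}, {pred P (hd Pj), hd Pj},
                             {last Pj, succ P (last Pj)} #}
                        + {# {last Pi, hd Pj}, {last Pj, succ P (last Pi)},
                             {pred P (hd Pj), succ P (last Pj)} #}"
    and "subadditive X H"
  shows "calH H P' \<le> calH H P"
proof -
  define R1 where "R1 = dep_edges H P"
  define R2 where "R2 = dep_edges H P'"
  define c1 where "c1 = (\<lambda>a. {b \<in> X. (a, b) \<in> (R1 \<union> R1\<inverse>)\<^sup>*})"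
  define c2 where "c2 = (\<lambda>a. {b \<in> X. (a, b) \<in> (R2 \<union> R2\<inverse>)\<^sup>*})"
  have X1: "set P = X" and X2: "set P' = X" using assms(2,7) unfolding tour_def by auto
  have p1: "pieces H P = c1 ` X" unfolding pieces_def c1_def R1_def X1 ..
  have p2: "pieces H P' = c2 ` X" unfolding pieces_def c2_def R2_def X2 ..
  define Rem where "Rem = {# {last Pi, succ P (last Pi)}, {pred P (hd Pj), hd Pj},
                             {last Pj, succ P (last Pj)} #}"
  have nd: "\<not> dep H (last Pi) (succ P (last Pi))" "\<not> dep H (pred P (hd Pj)) (hd Pj)"
    "\<not> dep H (last Pj) (succ P (last Pj))"
    using assms(3,4) unfolding max_subpath_def by auto
  have R12: "R1 \<subseteq> R2 \<union> R2\<inverse>"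
  proof
    fix p assume "p \<in> R1"
    then obtain i where i: "i < length P" "p = (P ! i, P ! ((i + 1) mod length P))"
      "dep H (P ! i) (P ! ((i + 1) mod length P))"
      unfolding R1_def dep_edges_def by blast
    define x where "x = P ! i"
    define y where "y = P ! ((i + 1) mod length P)"
    have e: "{x, y} \<in># tour_edges P" unfolding x_def y_def using edge_in_tour i(1) .
    have dxy: "dep H x y" using i(3) x_def y_def by simp
    have "{x, y} \<notin># Rem"
    proof
      assume "{x, y} \<in># Rem"
      then have "{x, y} = {last Pi, succ P (last Pi)} \<or> {x, y} = {pred P (hd Pj), hd Pj}
          \<or> {x, y} = {last Pj, succ P (last Pj)}" unfolding Rem_def by simp
      then show False
      proof (elim disjE)
        assume "{x, y} = {last Pi, succ P (last Pi)}"
        from dep_set[OF this, of H] show False using nd dxy by simp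
      next
        assume "{x, y} = {pred P (hd Pj), hd Pj}"
        from dep_set[OF this, of H] show False using nd dxy by simp
      next
        assume "{x, y} = {last Pj, succ P (last Pj)}"
        from dep_set[OF this, of H] show False using nd dxy by simp
      qed
    qed
    then have "{x, y} \<in># tour_edges P - Rem" using e by (simp add: in_diff_count not_in_iff)
    then have "{x, y} \<in># tour_edges P'" using assms(8) unfolding Rem_def by simp
    then show "p \<in> R2 \<union> R2\<inverse>" using tour_edge_dep[OF _ dxy] i(2) x_def y_def R2_def by simp
  qed
  have "R1 \<union> R1\<inverse> \<subseteq> R2 \<union> R2\<inverse>" using R12 by blast
  then have mono: "(R1 \<union> R1\<inverse>)\<^sup>* \<subseteq> (R2 \<union> R2\<inverse>)\<^sup>*" by (rule rtrancl_mono)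
  have "sum H (c2 ` X) \<le> sum H (c1 ` X)"
  proof (rule coarser[OF assms(9) assms(1)])
    show "\<And>a. a\<in>X \<Longrightarrow> a \<in> c1 a" by (rule cls_props(1)[OF c1_def])
    show "\<And>a b. a\<in>X \<Longrightarrow> b \<in> c1 a \<Longrightarrow> c1 b = c1 a" by (rule cls_props(2)[OF c1_def])
    show "\<And>a. a\<in>X \<Longrightarrow> c1 a \<subseteq> X" by (rule cls_props(3)[OF c1_def])
    show "\<And>a. a\<in>X \<Longrightarrow> a \<in> c2 a" by (rule cls_props(1)[OF c2_def])
    show "\<And>a b. a\<in>X \<Longrightarrow> b \<in> c2 a \<Longrightarrow> c2 b = c2 a" by (rule cls_props(2)[OF c2_def])
    show "\<And>a. a\<in>X \<Longrightarrow> c2 a \<subseteq> X" by (rule cls_props(3)[OF c2_def])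
    show "\<And>a. a\<in>X \<Longrightarrow> c1 a \<subseteq> c2 a" unfolding c1_def c2_def using mono by blast
  qed
  then show ?thesis unfolding calH_def p1 p2 .
qed

end
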